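(* Let $d$ and $n\le d$ be positive integers and let $\mathcal{H}=\{H_1,\ldots,H_k\}$ be a collection of subsets of $[d]=\{1,\ldots,d\}$ such that the intersection of any three of them is empty. Then the following collection $\mathcal{C}$ of subsets of $[d]$ is the set of circuits of a matroid on $[d]$: (1) every $(n-1)$-element subset of $[d]$ contained in $H_i\cap H_j$ for some two distinct members $H_i,H_j$ of $\mathcal{H}$ ("Type 1"); (2) every $n$-element subset of some $H_i\in\mathcal{H}$ that does not contain a subset of Type 1 ("Type 2"); (3) every $(n+1)$-element subset of $[d]$ that contains no subset of Type 1 or of Type 2 ("Type 3"). *)

theory Defs
  imports Main
begin

definition matroid_circuits :: "'a set \<Rightarrow> 'a set set \<Rightarrow> bool" where
  "matroid_circuits E \<C> \<longleftrightarrow>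
     (\<forall>C\<in>\<C>. C \<subseteq> E) \<and>
     {} \<notin> \<C> \<and>
     (\<forall>C1\<in>\<C>. \<forall>C2\<in>\<C>. C1 \<subseteq> C2 \<longrightarrow> C1 = C2) \<and>
     (\<forall>C1\<in>\<C>. \<forall>C2\<in>\<C>. \<forall>e. C1 \<noteq> C2 \<and> e \<in> C1 \<inter> C2 \<longrightarrow>
        (\<exists>C3\<in>\<C>. C3 \<subseteq> (C1 \<union> C2) - {e}))"

definition type1 :: "nat \<Rightarrow> nat \<Rightarrow> nat set set \<Rightarrow> nat set set" where
  "type1 d n \<H> = {S. S \<subseteq> {1..d} \<and> card S = n - 1 \<and>
      (\<exists>Hi\<in>\<H>. \<exists>Hj\<in>\<H>. Hi \<noteq> Hj \<and> S \<subseteq> Hi \<inter> Hj)}"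

definition type2 :: "nat \<Rightarrow> nat \<Rightarrow> nat set set \<Rightarrow> nat set set" where
  "type2 d n \<H> = {S. S \<subseteq> {1..d} \<and> card S = n \<and> (\<exists>H\<in>\<H>. S \<subseteq> H) \<and>
      \<not> (\<exists>T\<in>type1 d n \<H>. T \<subseteq> S)}"

definition type3 :: "nat \<Rightarrow> nat \<Rightarrow> nat set set \<Rightarrow> nat set set" where
  "type3 d n \<H> = {S. S \<subseteq> {1..d} \<and> card S = n + 1 \<and>
      \<not> (\<exists>T\<in>type1 d n \<H> \<union> type2 d n \<H>. T \<subseteq> S)}"

end

theory Submission
  imports Defs
begin

lemma lemA:
  assumes "X \<subseteq> {1..d}" "n + 1 \<le> card X"
  shows "\<exists>C\<in>type1 d n \<H> \<union> type2 d n \<H> \<union> type3 d n \<H>. C \<subseteq> X"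
proof -
  obtain Y where Y: "Y \<subseteq> X" "card Y = n + 1" using obtain_subset_with_card_n[OF assms(2)] by metis
  show ?thesis
  proof (cases "\<exists>T\<in>type1 d n \<H> \<union> type2 d n \<H>. T \<subseteq> Y")
    case True
    then show ?thesis using Y by blast
  next
    case False
    then have "Y \<in> type3 d n \<H>" using Y assms unfolding type3_def by blast
    then show ?thesis using Y by blast
  qed
qed

lemma lemB:
  assumes "X \<subseteq> H" "H \<in> \<H>" "H \<subseteq> {1..d}" "n \<le> card X"
  shows "\<exists>C\<in>type1 d n \<H> \<union> type2 d n \<H> \<union> type3 d n \<H>. C \<subseteq> X"
proof -
  obtain Y where Y: "Y \<subseteq> X" "card Y = n" using obtain_subset_with_card_n[OF assms(4)] by metis
  show ?thesis
  proof (cases "\<exists>T\<in>type1 d n \<H>. T \<subseteq> Y")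
    case True
    then show ?thesis using Y by blast
  next
    case False
    then have "Y \<in> type2 d n \<H>" using Y assms unfolding type2_def by blast
    then show ?thesis using Y by blast
  qed
qed

lemma lemT1:
  assumes "X \<subseteq> Hi \<inter> Hj" "Hi \<in> \<H>" "Hj \<in> \<H>" "Hi \<noteq> Hj" "Hi \<subseteq> {1..d}" "n - 1 \<le> card X"
  shows "\<exists>C\<in>type1 d n \<H> \<union> type2 d n \<H> \<union> type3 d n \<H>. C \<subseteq> X"
proof -
  obtain Y where Y: "Y \<subseteq> X" "card Y = n - 1" using obtain_subset_with_card_n[OF assms(6)] by metis
  have "Y \<in> type1 d n \<H>" using Y assms unfolding type1_def by blast
  then show ?thesis using Y by blast
qed

lemma fin_sub: "C \<in> type1 d n \<H> \<union> type2 d n \<H> \<union> type3 d n \<H> \<Longrightarrow> C \<subseteq> {1..d}"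
  unfolding type1_def type2_def type3_def Un_iff mem_Collect_eq by (elim disjE conjE) assumption+

lemma fin_C: "C \<in> type1 d n \<H> \<union> type2 d n \<H> \<union> type3 d n \<H> \<Longrightarrow> finite C"
  by (rule finite_subset[OF fin_sub]) simp_all

lemma card_t1: "C \<in> type1 d n \<H> \<Longrightarrow> card C = n - 1"
  unfolding type1_def mem_Collect_eq by (elim conjE)
lemma card_t2: "C \<in> type2 d n \<H> \<Longrightarrow> card C = n"
  unfolding type2_def mem_Collect_eq by (elim conjE)
lemma card_t3: "C \<in> type3 d n \<H> \<Longrightarrow> card C = n + 1"
  unfolding type3_def mem_Collect_eq by (elim conjE)
lemma nsub_t2: "C \<in> type2 d n \<H> \<Longrightarrow> T \<in> type1 d n \<H> \<Longrightarrow> T \<subseteq> C \<Longrightarrow> False"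
  unfolding type2_def mem_Collect_eq by (elim conjE) blast
lemma nsub_t3: "C \<in> type3 d n \<H> \<Longrightarrow> T \<in> type1 d n \<H> \<union> type2 d n \<H> \<Longrightarrow> T \<subseteq> C \<Longrightarrow> False"
  unfolding type3_def mem_Collect_eq by (elim conjE) blast

lemma inc:
  assumes "1 \<le> n"
    and C1: "C1 \<in> type1 d n \<H> \<union> type2 d n \<H> \<union> type3 d n \<H>"
    and C2: "C2 \<in> type1 d n \<H> \<union> type2 d n \<H> \<union> type3 d n \<H>"
    and sub: "C1 \<subseteq> C2"
  shows "C1 = C2"
proof -
  have f2: "finite C2" using fin_C[OF C2] .
  have cm: "card C1 \<le> card C2" using card_mono[OF f2 sub] .
  have eqc: "card C1 = card C2 \<Longrightarrow> C1 = C2" using card_subset_eq[OF f2 sub] by simp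
  have c1: "card C1 \<ge> n - 1" using C1
  proof (elim UnE)
    assume a1: "C1 \<in> type1 d n \<H>" show ?thesis using card_t1[OF a1] by simp
  next
    assume a1: "C1 \<in> type2 d n \<H>" show ?thesis using card_t2[OF a1] by simp
  next
    assume a1: "C1 \<in> type3 d n \<H>" show ?thesis using card_t3[OF a1] by simp
  qed
  show ?thesis using C2
  proof (elim UnE)
    assume a: "C2 \<in> type1 d n \<H>"
    show ?thesis using cm eqc c1 card_t1[OF a] by linarith
  next
    assume a: "C2 \<in> type2 d n \<H>"
    have "card C1 \<ge> n" using C1
    proof (elim UnE)
      assume "C1 \<in> type1 d n \<H>" then show ?thesis using nsub_t2[OF a _ sub] by simp
    next
      assume a1: "C1 \<in> type2 d n \<H>" show ?thesis using card_t2[OF a1] by simp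
    next
      assume a1: "C1 \<in> type3 d n \<H>" show ?thesis using card_t3[OF a1] by simp
    qed
    then show ?thesis using card_t2[OF a] cm eqc by linarith
  next
    assume a: "C2 \<in> type3 d n \<H>"
    have "card C1 = n + 1" using C1
    proof (elim UnE)
      assume "C1 \<in> type1 d n \<H>" then show ?thesis using nsub_t3[OF a _ sub] by simp
    next
      assume "C1 \<in> type2 d n \<H>" then show ?thesis using nsub_t3[OF a _ sub] by simp
    next
      assume "C1 \<in> type3 d n \<H>" then show ?thesis by (rule card_t3)
    qed
    then show ?thesis using card_t3[OF a] cm eqc by linarith
  qed
qed

lemma three:
  assumes "\<forall>A\<in>\<H>. \<forall>B\<in>\<H>. \<forall>C\<in>\<H>. A \<noteq> B \<and> A \<noteq> C \<and> B \<noteq> C \<longrightarrow> A \<inter> B \<inter> C = {}"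
    "A \<in> \<H>" "B \<in> \<H>" "C \<in> \<H>" "A \<noteq> B" "e \<in> A" "e \<in> B" "e \<in> C"
  shows "C = A \<or> C = B"
proof (rule ccontr)
  assume "\<not> (C = A \<or> C = B)"
  then have "A \<inter> B \<inter> C = {}" using assms(1-5) by blast
  then show False using assms(6-8) by blast
qed

lemma elim_main:
  assumes n1: "1 \<le> n"
    and H: "\<forall>H\<in>\<H>. H \<subseteq> {1..d}"
    and tr: "\<forall>A\<in>\<H>. \<forall>B\<in>\<H>. \<forall>C\<in>\<H>. A \<noteq> B \<and> A \<noteq> C \<and> B \<noteq> C \<longrightarrow> A \<inter> B \<inter> C = {}"
    and C1: "C1 \<in> type1 d n \<H> \<union> type2 d n \<H> \<union> type3 d n \<H>"
    and C2: "C2 \<in> type1 d n \<H> \<union> type2 d n \<H> \<union> type3 d n \<H>"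
    and ne: "C1 \<noteq> C2" and e: "e \<in> C1" "e \<in> C2"
  shows "\<exists>C3\<in>type1 d n \<H> \<union> type2 d n \<H> \<union> type3 d n \<H>. C3 \<subseteq> (C1 \<union> C2) - {e}"
proof -
  let ?U = "(C1 \<union> C2) - {e}"
  have f1: "finite C1" using fin_C[OF C1] .
  have f2: "finite C2" using fin_C[OF C2] .
  have fu: "finite (C1 \<union> C2)" using f1 f2 by simp
  have Usub: "?U \<subseteq> {1..d}" using fin_sub[OF C1] fin_sub[OF C2] by blast
  have "\<not> C2 \<subseteq> C1" using inc[OF n1 C2 C1] ne by blast
  then have "C1 \<subset> C1 \<union> C2" by blast
  then have lt1: "card C1 < card (C1 \<union> C2)" using psubset_card_mono[OF fu] by blast
  have "\<not> C1 \<subseteq> C2" using inc[OF n1 C1 C2] ne by blast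
  then have "C2 \<subset> C1 \<union> C2" by blast
  then have lt2: "card C2 < card (C1 \<union> C2)" using psubset_card_mono[OF fu] by blast
  have cU: "card ?U = card (C1 \<union> C2) - 1" using e by (simp add: card_Diff_singleton fu)
  show ?thesis
  proof (cases "n + 1 \<le> card ?U")
    case True
    then show ?thesis using lemA[OF Usub] by blast
  next
    case False
    then have small: "card (C1 \<union> C2) \<le> n + 1" using cU by linarith
    have nt3: "C \<notin> type3 d n \<H>" if "C = C1 \<or> C = C2" for C
      using that small lt1 lt2 unfolding type3_def by auto
    have cU1: "card C1 \<le> card ?U" "card C2 \<le> card ?U" using cU lt1 lt2 by linarith+
    have c1: "C1 \<in> type1 d n \<H> \<union> type2 d n \<H>" using C1 nt3 by blast
    have c2: "C2 \<in> type1 d n \<H> \<union> type2 d n \<H>" using C2 nt3 by blast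
    have case12: "\<exists>C3\<in>type1 d n \<H> \<union> type2 d n \<H> \<union> type3 d n \<H>. C3 \<subseteq> ?U"
      if a: "A \<in> type1 d n \<H>" "B \<in> type2 d n \<H>" "A = C1 \<and> B = C2 \<or> A = C2 \<and> B = C1" for A B
    proof -
      obtain Hi Hj where hij: "Hi \<in> \<H>" "Hj \<in> \<H>" "Hi \<noteq> Hj" "A \<subseteq> Hi \<inter> Hj"
        using a(1) unfolding type1_def by blast
      obtain Hb where hb: "Hb \<in> \<H>" "B \<subseteq> Hb" "card B = n" using a(2) unfolding type2_def by blast
      have "e \<in> A" "e \<in> B" using a(3) e by auto
      then have "Hb = Hi \<or> Hb = Hj" using three[OF tr hij(1,2) hb(1) hij(3)] hij hb by blast
      then have "?U \<subseteq> Hb" using a(3) hij hb by blast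
      moreover have "n \<le> card ?U" using cU1 hb a(3) by auto
      ultimately show ?thesis using lemB[of ?U Hb \<H> d n] hb H by blast
    qed
    show ?thesis
    proof (cases "C1 \<in> type1 d n \<H>")
      case t1: True
      show ?thesis
      proof (cases "C2 \<in> type1 d n \<H>")
        case True
        obtain Hi Hj where hij: "Hi \<in> \<H>" "Hj \<in> \<H>" "Hi \<noteq> Hj" "C1 \<subseteq> Hi \<inter> Hj"
          using t1 unfolding type1_def by blast
        obtain Hk Hl where hkl: "Hk \<in> \<H>" "Hl \<in> \<H>" "Hk \<noteq> Hl" "C2 \<subseteq> Hk \<inter> Hl"
          using True unfolding type1_def by blast
        have "Hk = Hi \<or> Hk = Hj" using three[OF tr hij(1,2) hkl(1) hij(3)] hij hkl e by blast
        moreover have "Hl = Hi \<or> Hl = Hj" using three[OF tr hij(1,2) hkl(2) hij(3)] hij hkl e by blast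
        ultimately have "Hk \<inter> Hl = Hi \<inter> Hj" using hkl(3) by blast
        then have "?U \<subseteq> Hi \<inter> Hj" using hij hkl by blast
        moreover have "n - 1 \<le> card ?U" using cU1 t1 unfolding type1_def by auto
        ultimately show ?thesis using lemT1[of ?U Hi Hj \<H> d n] hij H by blast
      next
        case False
        then show ?thesis using case12[of C1 C2] t1 c2 by blast
      qed
    next
      case nf1: False
      then have t2: "C1 \<in> type2 d n \<H>" using c1 nf1 by blast
      show ?thesis
      proof (cases "C2 \<in> type1 d n \<H>")
        case True
        then show ?thesis using case12[of C2 C1] t2 by blast
      next
        case False
        then have t2': "C2 \<in> type2 d n \<H>" using c2 by blast
        obtain Ha where ha: "Ha \<in> \<H>" "C1 \<subseteq> Ha" "card C1 = n" and nt: "\<not> (\<exists>T\<in>type1 d n \<H>. T \<subseteq> C1)"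
          using t2 unfolding type2_def by blast
        obtain Hb where hb: "Hb \<in> \<H>" "C2 \<subseteq> Hb" "card C2 = n" using t2' unfolding type2_def by blast
        show ?thesis
        proof (cases "Ha = Hb")
          case True
          then have "?U \<subseteq> Ha" using ha hb by blast
          moreover have "n \<le> card ?U" using cU1 ha by auto
          ultimately show ?thesis using lemB[of ?U Ha \<H> d n] ha H by blast
        next
          case False
          have "card (C1 \<union> C2) + card (C1 \<inter> C2) = card C1 + card C2"
            using card_Un_Int[OF f1 f2] by simp
          then have "n - 1 \<le> card (C1 \<inter> C2)" using small ha hb by linarith
          then obtain Y where Y: "Y \<subseteq> C1 \<inter> C2" "card Y = n - 1"
            using obtain_subset_with_card_n by metis
          have "Y \<in> type1 d n \<H>" unfolding type1_def using Y ha hb False fin_sub[OF C1] by blast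
          then show ?thesis using nt Y by blast
        qed
      qed
    qed
  qed
qed

theorem theorem3p1:
  fixes d n :: nat and \<H> :: "nat set set"
  assumes "1 \<le> n" and "n \<le> d"
    and "finite \<H>" and "\<forall>H\<in>\<H>. H \<subseteq> {1..d}"
    and "\<forall>A\<in>\<H>. \<forall>B\<in>\<H>. \<forall>C\<in>\<H>. A \<noteq> B \<and> A \<noteq> C \<and> B \<noteq> C \<longrightarrow> A \<inter> B \<inter> C = {}"
    and "2 \<le> n \<or> (\<forall>A\<in>\<H>. \<forall>B\<in>\<H>. A = B)"
  shows "matroid_circuits {1..d} (type1 d n \<H> \<union> type2 d n \<H> \<union> type3 d n \<H>)"
proof -
  have ne: "{} \<notin> type1 d n \<H> \<union> type2 d n \<H> \<union> type3 d n \<H>"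
  proof
    assume a: "{} \<in> type1 d n \<H> \<union> type2 d n \<H> \<union> type3 d n \<H>"
    show False
    proof (cases "{} \<in> type1 d n \<H>")
      case True
      then have "n - 1 = 0" "\<exists>Hi\<in>\<H>. \<exists>Hj\<in>\<H>. Hi \<noteq> Hj" unfolding type1_def by auto
      then show False using assms(6) by auto
    next
      case False
      then show False using a assms(1) unfolding type2_def type3_def by auto
    qed
  qed
  show ?thesis unfolding matroid_circuits_def
  proof (intro conjI ballI allI impI)
    fix C assume "C \<in> type1 d n \<H> \<union> type2 d n \<H> \<union> type3 d n \<H>"
    then show "C \<subseteq> {1..d}" by (rule fin_sub)
  next
    show "{} \<notin> type1 d n \<H> \<union> type2 d n \<H> \<union> type3 d n \<H>" by (rule ne)
  next
    fix C1 C2 assume "C1 \<in> type1 d n \<H> \<union> type2 d n \<H> \<union> type3 d n \<H>"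
      "C2 \<in> type1 d n \<H> \<union> type2 d n \<H> \<union> type3 d n \<H>" "C1 \<subseteq> C2"
    then show "C1 = C2" by (rule inc[OF assms(1)])
  next
    fix C1 C2 e assume a: "C1 \<in> type1 d n \<H> \<union> type2 d n \<H> \<union> type3 d n \<H>"
      "C2 \<in> type1 d n \<H> \<union> type2 d n \<H> \<union> type3 d n \<H>" "C1 \<noteq> C2 \<and> e \<in> C1 \<inter> C2"
    then have "e \<in> C1" "e \<in> C2" "C1 \<noteq> C2" by auto
    then show "\<exists>C3\<in>type1 d n \<H> \<union> type2 d n \<H> \<union> type3 d n \<H>. C3 \<subseteq> C1 \<union> C2 - {e}"
      using elim_main[OF assms(1) assms(4) assms(5) a(1) a(2)] by blast
  qed
qed

end
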